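(* Let $G$ be a compact Lie group and $X=(X_t)_{t\ge0}$ a $G$-valued Lévy process. The following are equivalent: (1) $X$ has auto-invariant by conjugation increments; (2) for every $t\ge0$, $X_t$ is invariant (in law) by conjugation by every element of its own support; (3) $X$ is invariant by conjugation by $H_X$, i.e. for every $g\in H_X$ the process $(g^{-1}X_tg)_{t\ge0}$ has the same law as $(X_t)_{t\ge0}$.
   Context: A Lévy process on $G$ is a càdlàg process with $X_0=e$ (neutral element) and independent and stationary right increments: for $0\le t_0<\dots<t_n$ the variables $(X_{t_{i-1}}^{-1}X_{t_i})_{i=1}^n$ are independent, and $X_s^{-1}X_t$ has the law of $X_{t-s}$ for $s<t$. ${\sf Supp}(Y)$ is the support of the law of $Y$; $H_X$ is the closure of the subgroup generated by $\bigcup_{t\ge0}{\sf Supp}(X_t)$. A finite family $(Y_i)_{i\in T}$ ($\#T\ge2$) of $G$-valued random variables is auto-invariant by conjugation if for all distinct $i,j\in T$ and every $g\in{\sf Supp}(Y_j)$, $gY_ig^{-1}$ has the same law as $Y_i$. $X$ has auto-invariant by conjugation increments if for every $0=t_0\le t_1\le\dots\le t_k$ the sequence $(X_{t_{i-1}}^{-1}X_{t_i})_{i=1}^k$ is auto-invariant by conjugation. *)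

theory Defs
  imports "HOL-Probability.Probability"
begin

type_synonym 'n mat = "real^'n^'n"

text \<open>A compact Lie group is represented (up to isomorphism of Lie groups) as a compact
  subgroup of GL(n,R); every compact Lie group arises this way (Peter--Weyl) and
  every compact subgroup of GL(n,R) is a closed, hence Lie, subgroup.\<close>
definition compact_matrix_group :: "'n::finite mat set \<Rightarrow> bool" where
  "compact_matrix_group G \<longleftrightarrow> compact G \<and> G \<subseteq> {A. invertible A} \<and> mat 1 \<in> G \<and>
     (\<forall>a\<in>G. \<forall>b\<in>G. a ** b \<in> G) \<and> (\<forall>a\<in>G. matrix_inv a \<in> G)"

definition supp :: "'a measure \<Rightarrow> ('a \<Rightarrow> 'b::topological_space) \<Rightarrow> 'b set" where
  "supp M Y = {x. \<forall>U. open U \<longrightarrow> x \<in> U \<longrightarrow> emeasure M (Y -` U \<inter> space M) > 0}"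

definition gen_subgroup :: "'n::finite mat set \<Rightarrow> 'n mat set" where
  "gen_subgroup S = \<Inter>{H. H \<subseteq> {A. invertible A} \<and> S \<subseteq> H \<and> mat 1 \<in> H \<and>
      (\<forall>a\<in>H. \<forall>b\<in>H. a ** b \<in> H) \<and> (\<forall>a\<in>H. matrix_inv a \<in> H)}"

definition H_X :: "'a measure \<Rightarrow> (real \<Rightarrow> 'a \<Rightarrow> 'n::finite mat) \<Rightarrow> 'n mat set" where
  "H_X M X = closure (gen_subgroup (\<Union>t\<in>{0..}. supp M (X t)))"

definition levy_process ::
  "'a measure \<Rightarrow> 'n::finite mat set \<Rightarrow> (real \<Rightarrow> 'a \<Rightarrow> 'n mat) \<Rightarrow> bool" where
  "levy_process M G X \<longleftrightarrow>
     prob_space M \<and>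
     (\<forall>t\<ge>0. X t \<in> borel_measurable M) \<and>
     (\<forall>t\<ge>0. \<forall>\<omega>\<in>space M. X t \<omega> \<in> G) \<and>
     (\<forall>\<omega>\<in>space M. X 0 \<omega> = mat 1) \<and>
     (\<forall>\<omega>\<in>space M. \<forall>t\<ge>0. continuous (at_right t) (\<lambda>s. X s \<omega>) \<and>
          (t > 0 \<longrightarrow> (\<exists>L. ((\<lambda>s. X s \<omega>) \<longlongrightarrow> L) (at_left t)))) \<and>
     (\<forall>(n::nat) (t::nat \<Rightarrow> real). 0 \<le> t 0 \<and> (\<forall>i<n. t i < t (Suc i)) \<longrightarrow>
          prob_space.indep_vars M (\<lambda>_. borel)
            (\<lambda>i \<omega>. matrix_inv (X (t (i - 1)) \<omega>) ** X (t i) \<omega>) {1..n}) \<and>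
     (\<forall>s t. 0 \<le> s \<and> s < t \<longrightarrow>
          distr M borel (\<lambda>\<omega>. matrix_inv (X s \<omega>) ** X t \<omega>) = distr M borel (X (t - s)))"

definition auto_inv_conj :: "'a measure \<Rightarrow> 'i set \<Rightarrow> ('i \<Rightarrow> 'a \<Rightarrow> 'n::finite mat) \<Rightarrow> bool" where
  "auto_inv_conj M T Y \<longleftrightarrow> (\<forall>i\<in>T. \<forall>j\<in>T. i \<noteq> j \<longrightarrow> (\<forall>g\<in>supp M (Y j).
      distr M borel (\<lambda>\<omega>. g ** Y i \<omega> ** matrix_inv g) = distr M borel (Y i)))"

definition auto_inv_conj_increments :: "'a measure \<Rightarrow> (real \<Rightarrow> 'a \<Rightarrow> 'n::finite mat) \<Rightarrow> bool" where
  "auto_inv_conj_increments M X \<longleftrightarrow>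
     (\<forall>(k::nat) (t::nat \<Rightarrow> real). t 0 = 0 \<and> (\<forall>i<k. t i \<le> t (Suc i)) \<longrightarrow>
        auto_inv_conj M {1..k} (\<lambda>i \<omega>. matrix_inv (X (t (i - 1)) \<omega>) ** X (t i) \<omega>))"

definition process_law :: "'a measure \<Rightarrow> (real \<Rightarrow> 'a \<Rightarrow> 'n::finite mat) \<Rightarrow> (real \<Rightarrow> 'n mat) measure" where
  "process_law M X = distr M (PiM {0..} (\<lambda>_. borel)) (\<lambda>\<omega>. restrict (\<lambda>t. X t \<omega>) {0..})"

end

theory Submission
  imports Defs
begin

lemma mmult_continuous: "continuous_on UNIV (\<lambda>x::('n::finite mat \<times> 'n mat). fst x ** snd x)"
  unfolding matrix_matrix_mult_def
  by (intro continuous_intros continuous_on_vec_lambda) 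

lemma borel_measurable_mmult[measurable (raw)]:
  fixes f g :: "'a \<Rightarrow> 'n::finite mat"
  assumes "f \<in> borel_measurable M" "g \<in> borel_measurable M"
  shows "(\<lambda>x. f x ** g x) \<in> borel_measurable M"
  using assms by (rule borel_measurable_continuous_Pair) (rule mmult_continuous)

lemma inv_left: "invertible (A::'n::finite mat) \<Longrightarrow> matrix_inv A ** A = mat 1"
  unfolding invertible_def matrix_inv_def by (rule someI2_ex) auto
lemma inv_right: "invertible (A::'n::finite mat) \<Longrightarrow> A ** matrix_inv A = mat 1"
  unfolding invertible_def matrix_inv_def by (rule someI2_ex) auto
lemma inv_unique: "(A::'n::finite mat) ** B = mat 1 \<Longrightarrow> matrix_inv A = B"
  by (metis inv_left invertible_right_inverse matrix_mul_assoc matrix_mul_lid matrix_mul_rid)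
lemma inv_inv: "invertible (A::'n::finite mat) \<Longrightarrow> matrix_inv (matrix_inv A) = A"
  by (rule inv_unique) (rule inv_left)
lemma inv_one: "matrix_inv (mat 1 :: 'n::finite mat) = mat 1"
  by (rule inv_unique) simp
lemma invertible_inv: "invertible (A::'n::finite mat) \<Longrightarrow> invertible (matrix_inv A)"
  using inv_left invertible_right_inverse by blast

lemma supp_distr:
  assumes "Y \<in> borel_measurable M"
  shows "supp M Y = {x. \<forall>U. open U \<longrightarrow> x \<in> U \<longrightarrow> emeasure (distr M borel Y) U > 0}"
  unfolding supp_def using assms by (simp add: emeasure_distr)

lemma supp_eq_distr:
  assumes "Y \<in> borel_measurable M" "Z \<in> borel_measurable M" "distr M borel Y = distr M borel Z"
  shows "supp M Y = supp M Z"
  using assms by (simp add: supp_distr)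

lemma supp_cong:
  assumes "\<And>\<omega>. \<omega> \<in> space M \<Longrightarrow> Y \<omega> = Z \<omega>"
  shows "supp M Y = supp M Z"
proof -
  have "\<And>U. Y -` U \<inter> space M = Z -` U \<inter> space M" using assms by auto
  then show ?thesis unfolding supp_def by simp
qed

lemma supp_subset_closed:
  assumes "closed C" "\<And>\<omega>. \<omega> \<in> space M \<Longrightarrow> Y \<omega> \<in> C"
  shows "supp M Y \<subseteq> C"
proof
  fix x assume x: "x \<in> supp M Y"
  show "x \<in> C"
  proof (rule ccontr)
    assume "x \<notin> C"
    then have "open (- C)" "x \<in> - C" using assms by auto
    with x have "emeasure M (Y -` (- C) \<inter> space M) > 0" unfolding supp_def by blast
    moreover have "Y -` (- C) \<inter> space M = {}" using assms by auto
    ultimately show False by simp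
  qed
qed

lemma supp_const:
  fixes c :: "'b::t1_space"
  assumes "prob_space M" "\<And>\<omega>. \<omega> \<in> space M \<Longrightarrow> Y \<omega> = c"
  shows "supp M Y = {c}"
proof -
  interpret prob_space M by fact
  have "supp M Y \<subseteq> {c}" by (rule supp_subset_closed) (use assms in auto)
  moreover have "c \<in> supp M Y"
  proof -
    { fix U :: "'b set" assume "open U" "c \<in> U"
      then have "Y -` U \<inter> space M = space M" using assms by auto
      then have "emeasure M (Y -` U \<inter> space M) > 0" by (simp add: emeasure_space_1) }
    then show ?thesis unfolding supp_def by auto
  qed
  ultimately show ?thesis by auto
qed

lemma closed_supp: "closed (supp M Y)"
proof -
  have "open (- supp M Y)"
  proof (rule open_subopen[THEN iffD2], rule ballI)
    fix x assume "x \<in> - supp M Y"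
    then have "\<not> (\<forall>U. open U \<longrightarrow> x \<in> U \<longrightarrow> emeasure M (Y -` U \<inter> space M) > 0)"
      unfolding supp_def by simp
    then obtain U where U: "open U" "x \<in> U" "\<not> emeasure M (Y -` U \<inter> space M) > 0"
      by blast
    have "U \<subseteq> - supp M Y"
    proof
      fix y assume "y \<in> U"
      then have "\<not> (\<forall>V. open V \<longrightarrow> y \<in> V \<longrightarrow> emeasure M (Y -` V \<inter> space M) > 0)"
        using U by blast
      then show "y \<in> - supp M Y" unfolding supp_def by simp
    qed
    then show "\<exists>T. open T \<and> x \<in> T \<and> T \<subseteq> - supp M Y" using U(1,2) by blast
  qed
  then show ?thesis by (simp add: closed_def)
qed

lemma supp_full:
  fixes Y :: "'a \<Rightarrow> 'b::second_countable_topology"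
  assumes Y: "Y \<in> borel_measurable M"
  shows "emeasure M (Y -` (- supp M Y) \<inter> space M) = 0"
proof -
  let ?N = "distr M borel Y"
  define F where "F = {U. open U \<and> emeasure ?N U = 0}"
  have "- supp M Y = \<Union>F"
    unfolding supp_distr[OF Y] F_def by (auto simp: not_less)
  obtain F' where F': "F' \<subseteq> F" "countable F'" "\<Union>F' = \<Union>F"
    using Lindelof[of F] unfolding F_def by auto
  have "(\<Union>U\<in>F'. U) \<in> null_sets ?N"
  proof (intro null_sets_UN')
    show "countable F'" by fact
    fix U assume "U \<in> F'"
    then have "open U" "emeasure ?N U = 0" using F' unfolding F_def by auto
    then show "U \<in> null_sets ?N" by (simp add: null_sets_def)
  qed
  moreover have "(\<Union>U\<in>F'. U) = - supp M Y" using F'(3) \<open>- supp M Y = \<Union>F\<close> by simp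
  ultimately have "emeasure ?N (- supp M Y) = 0" by (metis null_setsD1)
  moreover have "- supp M Y \<in> sets borel" using closed_supp[of M Y] by (simp add: borel_closed borel_comp)
  ultimately show ?thesis using Y by (simp add: emeasure_distr)
qed

lemma measure_eq_by_cont:
  fixes \<mu> \<nu> :: "'b::{metric_space, second_countable_topology} measure"
  assumes s\<mu>: "sets \<mu> = sets borel" and s\<nu>: "sets \<nu> = sets borel"
    and f\<mu>: "finite_measure \<mu>" and f\<nu>: "finite_measure \<nu>"
    and eq: "\<And>f::'b \<Rightarrow> real. continuous_on UNIV f \<Longrightarrow> (\<And>x. 0 \<le> f x) \<Longrightarrow> (\<And>x. f x \<le> 1) \<Longrightarrow>
               integral\<^sup>L \<mu> f = integral\<^sup>L \<nu> f"
  shows "\<mu> = \<nu>"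
proof -
  interpret m: finite_measure \<mu> by fact
  interpret n: finite_measure \<nu> by fact
  have sp\<mu>: "space \<mu> = UNIV" using sets_eq_imp_space_eq[OF s\<mu>] by simp
  have sp\<nu>: "space \<nu> = UNIV" using sets_eq_imp_space_eq[OF s\<nu>] by simp
  have sb: "sets borel = sigma_sets UNIV (Collect closed)"
    by (subst borel_eq_closed) (simp add: sets_measure_of)
  have closed_eq: "emeasure \<mu> F = emeasure \<nu> F" if F: "closed F" for F :: "'b set"
  proof (cases "F = {}")
    case True then show ?thesis by simp
  next
    case False
    define f where "f k x = max 0 (1 - real k * infdist x F)" for k :: nat and x
    have cont: "continuous_on UNIV (f k)" for k
      unfolding f_def by (intro continuous_intros)
    have meas\<mu>: "f k \<in> borel_measurable \<mu>" for k
      by (subst measurable_cong_sets[OF s\<mu> refl]) (rule borel_measurable_continuous_onI[OF cont])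
    have meas\<nu>: "f k \<in> borel_measurable \<nu>" for k
      by (subst measurable_cong_sets[OF s\<nu> refl]) (rule borel_measurable_continuous_onI[OF cont])
    have Fb: "F \<in> sets borel" using F by auto
    have lim: "(\<lambda>k. f k x) \<longlonglongrightarrow> indicator F x" for x
    proof (cases "x \<in> F")
      case True
      then show ?thesis by (simp add: f_def)
    next
      case xF: False
      have d: "infdist x F > 0" using infdist_pos_not_in_closed[OF F False xF] .
      obtain N :: nat where N: "1 / infdist x F < real N" using reals_Archimedean2 by blast
      have "eventually (\<lambda>k. f k x = indicator F x) sequentially"
        unfolding eventually_sequentially
      proof (intro exI allI impI)
        fix k assume "N \<le> k"
        then have "1 / infdist x F < real k" using N by (meson less_le_trans of_nat_le_iff)
        then have "1 < real k * infdist x F" using d by (simp add: field_simps)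
        then show "f k x = indicator F x" using xF by (simp add: f_def)
      qed
      then show ?thesis by (rule tendsto_eventually)
    qed
    have bnd: "norm (f k x) \<le> 1" for k x
      unfolding f_def using infdist_nonneg[of x F] by auto
    have L\<mu>: "(\<lambda>k. integral\<^sup>L \<mu> (f k)) \<longlonglongrightarrow> integral\<^sup>L \<mu> (indicator F)"
      by (rule integral_dominated_convergence[where w="\<lambda>_. 1"])
         (use meas\<mu> lim bnd Fb s\<mu> in auto)
    have L\<nu>: "(\<lambda>k. integral\<^sup>L \<nu> (f k)) \<longlonglongrightarrow> integral\<^sup>L \<nu> (indicator F)"
      by (rule integral_dominated_convergence[where w="\<lambda>_. 1"])
         (use meas\<nu> lim bnd Fb s\<nu> in auto)
    have "integral\<^sup>L \<mu> (f k) = integral\<^sup>L \<nu> (f k)" for k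
      by (rule eq[OF cont]) (use bnd in \<open>auto simp: f_def\<close>)
    then have "integral\<^sup>L \<mu> (indicator F) = integral\<^sup>L \<nu> (indicator F :: 'b \<Rightarrow> real)"
      using L\<mu> L\<nu> LIMSEQ_unique by fastforce
    then have "measure \<mu> F = measure \<nu> F" using sp\<mu> sp\<nu> by simp
    then show ?thesis using Fb s\<mu> s\<nu> by (simp add: m.emeasure_eq_measure n.emeasure_eq_measure)
  qed
  show ?thesis
  proof (rule measure_eqI_generator_eq[where E="Collect closed" and \<Omega>=UNIV and A="\<lambda>_. UNIV"])
    show "Int_stable (Collect closed :: 'b set set)" by (auto simp: Int_stable_def)
    show "sets \<mu> = sigma_sets UNIV (Collect closed)" using s\<mu> sb by simp
    show "sets \<nu> = sigma_sets UNIV (Collect closed)" using s\<nu> sb by simp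
  qed (use closed_eq m.emeasure_real in auto)
qed

lemma distr_eq_limit:
  fixes A B :: "nat \<Rightarrow> 'a \<Rightarrow> 'b::{metric_space, second_countable_topology}"
  assumes P: "prob_space M"
    and mA: "\<And>k. A k \<in> borel_measurable M" and mB: "\<And>k. B k \<in> borel_measurable M"
    and mA': "A' \<in> borel_measurable M" and mB': "B' \<in> borel_measurable M"
    and lA: "\<And>\<omega>. \<omega> \<in> space M \<Longrightarrow> (\<lambda>k. A k \<omega>) \<longlonglongrightarrow> A' \<omega>"
    and lB: "\<And>\<omega>. \<omega> \<in> space M \<Longrightarrow> (\<lambda>k. B k \<omega>) \<longlonglongrightarrow> B' \<omega>"
    and eqk: "\<And>k. distr M borel (A k) = distr M borel (B k)"
  shows "distr M borel A' = distr M borel B'"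
proof (rule measure_eq_by_cont)
  interpret prob_space M by fact
  show "finite_measure (distr M borel A')" "finite_measure (distr M borel B')"
    using prob_space_distr[OF mA'] prob_space_distr[OF mB'] by (simp_all add: prob_space_def)
  fix f :: "'b \<Rightarrow> real" assume cf: "continuous_on UNIV f" and f0: "\<And>x. 0 \<le> f x" and f1: "\<And>x. f x \<le> 1"
  have mf: "f \<in> borel_measurable borel" by (rule borel_measurable_continuous_onI[OF cf])
  have ic: "isCont f x" for x using cf by (simp add: continuous_on_eq_continuous_at)
  have bnd: "norm (f x) \<le> 1" for x using f0 f1 by auto
  have LA: "(\<lambda>k. integral\<^sup>L M (\<lambda>\<omega>. f (A k \<omega>))) \<longlonglongrightarrow> integral\<^sup>L M (\<lambda>\<omega>. f (A' \<omega>))"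
    by (rule integral_dominated_convergence[where w="\<lambda>_. 1"])
       (use mA mA' mf bnd in auto, rule AE_I2, rule isCont_tendsto_compose[OF ic lA])
  have LB: "(\<lambda>k. integral\<^sup>L M (\<lambda>\<omega>. f (B k \<omega>))) \<longlonglongrightarrow> integral\<^sup>L M (\<lambda>\<omega>. f (B' \<omega>))"
    by (rule integral_dominated_convergence[where w="\<lambda>_. 1"])
       (use mB mB' mf bnd in auto, rule AE_I2, rule isCont_tendsto_compose[OF ic lB])
  have "integral\<^sup>L M (\<lambda>\<omega>. f (A k \<omega>)) = integral\<^sup>L M (\<lambda>\<omega>. f (B k \<omega>))" for k
    using eqk[of k] integral_distr[OF mA[of k] mf] integral_distr[OF mB[of k] mf] by simp
  then have "integral\<^sup>L M (\<lambda>\<omega>. f (A' \<omega>)) = integral\<^sup>L M (\<lambda>\<omega>. f (B' \<omega>))"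
    using LA LB LIMSEQ_unique by fastforce
  then show "integral\<^sup>L (distr M borel A') f = integral\<^sup>L (distr M borel B') f"
    using integral_distr[OF mA' mf] integral_distr[OF mB' mf] by simp
qed simp_all

lemma distr_map_eq:
  assumes "Y \<in> measurable M N" "Z \<in> measurable M N" "\<phi> \<in> measurable N L"
    and "distr M N Y = distr M N Z"
  shows "distr M L (\<lambda>\<omega>. \<phi> (Y \<omega>)) = distr M L (\<lambda>\<omega>. \<phi> (Z \<omega>))"
proof -
  have "distr M L (\<lambda>\<omega>. \<phi> (Y \<omega>)) = distr (distr M N Y) L \<phi>"
    using distr_distr[OF assms(3,1)] by (simp add: comp_def)
  also have "\<dots> = distr (distr M N Z) L \<phi>" using assms(4) by simp
  also have "\<dots> = distr M L (\<lambda>\<omega>. \<phi> (Z \<omega>))"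
    using distr_distr[OF assms(3,2)] by (simp add: comp_def)
  finally show ?thesis .
qed

lemma lmult_meas:
  fixes g :: "'n::finite mat"
  shows "(\<lambda>A. g ** A) \<in> borel_measurable borel"
  unfolding matrix_matrix_mult_def
  by (intro borel_measurable_continuous_onI continuous_intros continuous_on_vec_lambda)
lemma rmult_meas:
  fixes g :: "'n::finite mat"
  shows "(\<lambda>A. A ** g) \<in> borel_measurable borel"
  unfolding matrix_matrix_mult_def
  by (intro borel_measurable_continuous_onI continuous_intros continuous_on_vec_lambda)
lemma conj_meas:
  fixes g h :: "'n::finite mat"
  shows "(\<lambda>A. g ** A ** h) \<in> borel_measurable borel"
  unfolding matrix_matrix_mult_def
  by (intro borel_measurable_continuous_onI continuous_intros continuous_on_vec_lambda)

locale levy =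
  fixes M :: "'a measure" and G :: "'n::finite mat set" and X :: "real \<Rightarrow> 'a \<Rightarrow> 'n mat"
  assumes cmg: "compact_matrix_group G" and lp: "levy_process M G X"
begin

lemma P: "prob_space M" using lp unfolding levy_process_def by blast

sublocale prob_space M by (rule P)

lemma mX[measurable]: "t \<ge> 0 \<Longrightarrow> X t \<in> borel_measurable M"
  using lp unfolding levy_process_def by blast

lemma XG: "t \<ge> 0 \<Longrightarrow> \<omega> \<in> space M \<Longrightarrow> X t \<omega> \<in> G"
  using lp unfolding levy_process_def by blast

lemma X0: "\<omega> \<in> space M \<Longrightarrow> X 0 \<omega> = mat 1"
  using lp unfolding levy_process_def by blast

lemma G_inv: "g \<in> G \<Longrightarrow> invertible g"
  using cmg unfolding compact_matrix_group_def by blast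
lemma G_mult: "a \<in> G \<Longrightarrow> b \<in> G \<Longrightarrow> a ** b \<in> G"
  using cmg unfolding compact_matrix_group_def by blast
lemma G_minv: "a \<in> G \<Longrightarrow> matrix_inv a \<in> G"
  using cmg unfolding compact_matrix_group_def by blast
lemma G_one: "mat 1 \<in> G"
  using cmg unfolding compact_matrix_group_def by blast
lemma G_closed: "closed G"
  using cmg unfolding compact_matrix_group_def by (blast intro: compact_imp_closed)

lemma indep:
  assumes "0 \<le> t 0" "\<And>i. i < n \<Longrightarrow> t i < t (Suc i)"
  shows "indep_vars (\<lambda>_. borel) (\<lambda>i \<omega>. matrix_inv (X (t (i - 1)) \<omega>) ** X (t i) \<omega>) {1..n}"
  using lp assms unfolding levy_process_def by blast

lemma stat:
  assumes "0 \<le> s" "s < t"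
  shows "distr M borel (\<lambda>\<omega>. matrix_inv (X s \<omega>) ** X t \<omega>) = distr M borel (X (t - s))"
  using lp assms unfolding levy_process_def by blast

definition incr where "incr a b = (\<lambda>\<omega>. matrix_inv (X a \<omega>) ** X b \<omega>)"

lemma incr_same: "\<omega> \<in> space M \<Longrightarrow> 0 \<le> a \<Longrightarrow> incr a a \<omega> = mat 1"
  unfolding incr_def using XG G_inv inv_left by blast

lemma incr_meas[measurable]:
  assumes "0 \<le> a" "a \<le> b"
  shows "incr a b \<in> borel_measurable M"
proof (cases "a = b")
  case True
  have "(\<lambda>\<omega>. mat 1) \<in> borel_measurable M" by simp
  then show ?thesis using incr_same assms True by (subst measurable_cong) auto
next
  case False
  define t :: "nat \<Rightarrow> real" where "t i = (if i = 0 then a else b)" for i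
  have "indep_vars (\<lambda>_. borel) (\<lambda>i \<omega>. matrix_inv (X (t (i - 1)) \<omega>) ** X (t i) \<omega>) {1..1}"
    by (rule indep) (use assms False in \<open>auto simp: t_def\<close>)
  then have "(\<lambda>\<omega>. matrix_inv (X (t (1 - 1)) \<omega>) ** X (t 1) \<omega>) \<in> borel_measurable M"
    unfolding indep_vars_def by auto
  then show ?thesis by (simp add: t_def incr_def)
qed

lemma incr_law:
  assumes "0 \<le> a" "a \<le> b"
  shows "distr M borel (incr a b) = distr M borel (X (b - a))"
proof (cases "a = b")
  case True
  have "distr M borel (incr a b) = distr M borel (\<lambda>_. mat 1)"
    by (rule distr_cong) (use incr_same assms True in auto)
  also have "\<dots> = distr M borel (X (b - a))"
    by (rule distr_cong) (use X0 True in auto)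
  finally show ?thesis .
next
  case False
  then show ?thesis using stat[of a b] assms unfolding incr_def by auto
qed

abbreviation S where "S t \<equiv> supp M (X t)"

lemma S_G: "t \<ge> 0 \<Longrightarrow> S t \<subseteq> G"
  by (rule supp_subset_closed[OF G_closed XG])

lemma S0: "S 0 = {mat 1}"
  by (rule supp_const[OF P X0])

lemma supp_incr: "0 \<le> a \<Longrightarrow> a \<le> b \<Longrightarrow> supp M (incr a b) = S (b - a)"
  by (rule supp_eq_distr) (auto simp: incr_law)

definition Inv where "Inv s g \<longleftrightarrow> distr M borel (\<lambda>\<omega>. g ** X s \<omega> ** matrix_inv g) = distr M borel (X s)"
definition Inv' where "Inv' s g \<longleftrightarrow> distr M borel (\<lambda>\<omega>. g ** X s \<omega>) = distr M borel (\<lambda>\<omega>. X s \<omega> ** g)"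

lemma Inv_Inv':
  assumes "s \<ge> 0" "invertible g"
  shows "Inv s g \<longleftrightarrow> Inv' s g"
proof
  assume "Inv s g"
  then have "distr M borel (\<lambda>\<omega>. (g ** X s \<omega> ** matrix_inv g) ** g) = distr M borel (\<lambda>\<omega>. X s \<omega> ** g)"
    unfolding Inv_def using assms by (intro distr_map_eq[OF _ _ rmult_meas]) auto
  moreover have "\<And>\<omega>. (g ** X s \<omega> ** matrix_inv g) ** g = g ** X s \<omega>"
    using assms by (simp add: inv_left matrix_mul_assoc[symmetric])
  ultimately show "Inv' s g" unfolding Inv'_def by simp
next
  assume "Inv' s g"
  then have "distr M borel (\<lambda>\<omega>. (g ** X s \<omega>) ** matrix_inv g) = distr M borel (\<lambda>\<omega>. (X s \<omega> ** g) ** matrix_inv g)"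
    unfolding Inv'_def using assms by (intro distr_map_eq[OF _ _ rmult_meas]) auto
  moreover have "\<And>\<omega>. (X s \<omega> ** g) ** matrix_inv g = X s \<omega>"
    using assms by (simp add: inv_right matrix_mul_assoc[symmetric])
  ultimately show "Inv s g" unfolding Inv_def by simp
qed

end

lemma tendsto_mmult:
  fixes f g :: "'b \<Rightarrow> 'n::finite mat"
  assumes "(f \<longlongrightarrow> a) F" "(g \<longlongrightarrow> b) F"
  shows "((\<lambda>x. f x ** g x) \<longlongrightarrow> a ** b) F"
proof -
  have "isCont (\<lambda>x::('n mat \<times> 'n mat). fst x ** snd x) (a, b)"
    using mmult_continuous continuous_on_eq_continuous_at[OF open_UNIV] by blast
  from isCont_tendsto_compose[OF this tendsto_Pair[OF assms]] show ?thesis by simp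
qed

lemma gen_subgroup_sub: "S \<subseteq> gen_subgroup S"
  unfolding gen_subgroup_def by blast
lemma gen_subgroup_inv: "g \<in> gen_subgroup S \<Longrightarrow> matrix_inv g \<in> gen_subgroup S"
  unfolding gen_subgroup_def by blast
lemma gen_subgroup_least:
  assumes "H \<subseteq> {A. invertible A}" "S \<subseteq> H" "mat 1 \<in> H"
    "\<And>a b. a \<in> H \<Longrightarrow> b \<in> H \<Longrightarrow> a ** b \<in> H" "\<And>a. a \<in> H \<Longrightarrow> matrix_inv a \<in> H"
  shows "gen_subgroup S \<subseteq> H"
  unfolding gen_subgroup_def using assms by blast

context levy begin

lemma Inv'_one: "Inv' s (mat 1)" unfolding Inv'_def by simp

lemma Inv'_mult:
  assumes s: "s \<ge> 0" and a: "Inv' s a" and b: "Inv' s b"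
  shows "Inv' s (a ** b)"
proof -
  have "distr M borel (\<lambda>\<omega>. a ** (b ** X s \<omega>)) = distr M borel (\<lambda>\<omega>. a ** (X s \<omega> ** b))"
    using b s unfolding Inv'_def by (intro distr_map_eq[OF _ _ lmult_meas]) auto
  moreover have "distr M borel (\<lambda>\<omega>. (a ** X s \<omega>) ** b) = distr M borel (\<lambda>\<omega>. (X s \<omega> ** a) ** b)"
    using a s unfolding Inv'_def by (intro distr_map_eq[OF _ _ rmult_meas]) auto
  ultimately show ?thesis unfolding Inv'_def by (simp add: matrix_mul_assoc)
qed

lemma Inv'_inv:
  assumes s: "s \<ge> 0" and a: "Inv' s a" and ia: "invertible a"
  shows "Inv' s (matrix_inv a)"
proof -
  let ?b = "matrix_inv a"
  have "distr M borel (\<lambda>\<omega>. ?b ** (a ** X s \<omega>) ** ?b) = distr M borel (\<lambda>\<omega>. ?b ** (X s \<omega> ** a) ** ?b)"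
    using a s unfolding Inv'_def by (intro distr_map_eq[OF _ _ conj_meas]) auto
  moreover have "\<And>A. ?b ** (a ** A) ** ?b = A ** ?b"
    using ia by (simp add: matrix_mul_assoc inv_left)
  moreover have "\<And>A. ?b ** (A ** a) ** ?b = ?b ** A"
    using ia by (simp add: matrix_mul_assoc[symmetric] inv_right)
  ultimately show ?thesis unfolding Inv'_def by simp
qed

definition K where "K s = {g \<in> G. Inv' s g}"

lemma closed_K:
  assumes s: "s \<ge> 0"
  shows "closed (K s)"
  unfolding closed_sequential_limits
proof (intro allI impI, elim conjE)
  fix g :: "nat \<Rightarrow> 'n mat" and l
  assume gK: "\<forall>n. g n \<in> K s" and lim: "g \<longlonglongrightarrow> l"
  have "l \<in> G" using G_closed gK lim unfolding K_def closed_sequential_limits by blast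
  moreover have "Inv' s l"
    unfolding Inv'_def
  proof (rule distr_eq_limit[where A="\<lambda>k \<omega>. g k ** X s \<omega>" and B="\<lambda>k \<omega>. X s \<omega> ** g k"])
    show "prob_space M" by (rule P)
    show "distr M borel (\<lambda>\<omega>. g k ** X s \<omega>) = distr M borel (\<lambda>\<omega>. X s \<omega> ** g k)" for k
      using gK unfolding K_def Inv'_def by auto
    show "(\<lambda>k. g k ** X s \<omega>) \<longlonglongrightarrow> l ** X s \<omega>" for \<omega>
      by (rule tendsto_mmult[OF lim tendsto_const])
    show "(\<lambda>k. X s \<omega> ** g k) \<longlonglongrightarrow> X s \<omega> ** l" for \<omega>
      by (rule tendsto_mmult[OF tendsto_const lim])
  qed (use s in auto)
  ultimately show "l \<in> K s" unfolding K_def by simp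
qed

lemma gen_sub_K:
  assumes s: "s \<ge> 0" and SK: "\<And>t g. t \<ge> 0 \<Longrightarrow> g \<in> S t \<Longrightarrow> Inv' s g"
  shows "gen_subgroup (\<Union>t\<in>{0..}. S t) \<subseteq> K s"
proof (rule gen_subgroup_least)
  show "K s \<subseteq> {A. invertible A}" unfolding K_def using G_inv by auto
  show "(\<Union>t\<in>{0..}. S t) \<subseteq> K s" unfolding K_def using SK S_G by auto
  show "mat 1 \<in> K s" unfolding K_def using G_one Inv'_one by auto
  show "a ** b \<in> K s" if "a \<in> K s" "b \<in> K s" for a b
    using that G_mult Inv'_mult s unfolding K_def by auto
  show "matrix_inv a \<in> K s" if "a \<in> K s" for a
    using that G_minv Inv'_inv s G_inv unfolding K_def by auto
qed

lemma gen_sub_G: "gen_subgroup (\<Union>t\<in>{0..}. S t) \<subseteq> G"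
  by (rule gen_subgroup_least) (use G_inv S_G G_one G_mult G_minv in auto)

lemma HX_sub_K:
  assumes s: "s \<ge> 0" and SK: "\<And>t g. t \<ge> 0 \<Longrightarrow> g \<in> S t \<Longrightarrow> Inv' s g"
  shows "H_X M X \<subseteq> K s"
  unfolding H_X_def using gen_sub_K[OF s SK] closed_K[OF s] by (simp add: closure_minimal)

lemma HX_sub_G: "H_X M X \<subseteq> G"
  unfolding H_X_def using gen_sub_G G_closed by (simp add: closure_minimal)

end

fun mprod :: "(nat \<Rightarrow> 'n::finite mat) \<Rightarrow> nat \<Rightarrow> 'n mat" where
  "mprod y 0 = mat 1"
| "mprod y (Suc j) = mprod y j ** y (Suc j)"

lemma mprod_meas:
  "j \<le> n \<Longrightarrow> (\<lambda>y. mprod y j) \<in> borel_measurable (PiM {1..n} (\<lambda>_. borel :: 'n::finite mat measure))"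
proof (induction j)
  case 0 then show ?case by simp
next
  case (Suc j)
  have "(\<lambda>y. y (Suc j)) \<in> borel_measurable (PiM {1..n} (\<lambda>_. borel :: 'n mat measure))"
    by (rule measurable_component_singleton) (use Suc.prems in auto)
  with Suc show ?case by (simp add: borel_measurable_mmult)
qed

context levy begin

lemma fdd_conj:
  fixes a b :: "'n mat" and t :: "nat \<Rightarrow> real"
  assumes ba: "b ** a = mat 1" and t0: "t 0 = 0" and mono: "\<And>i. i < n \<Longrightarrow> t i < t (Suc i)"
    and inv: "\<And>i. 1 \<le> i \<Longrightarrow> i \<le> n \<Longrightarrow>
       distr M borel (\<lambda>\<omega>. a ** X (t i - t (i - 1)) \<omega> ** b) = distr M borel (X (t i - t (i - 1)))"
  shows "distr M (PiM {..n} (\<lambda>_. borel)) (\<lambda>\<omega>. \<lambda>j\<in>{..n}. a ** X (t j) \<omega> ** b)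
       = distr M (PiM {..n} (\<lambda>_. borel)) (\<lambda>\<omega>. \<lambda>j\<in>{..n}. X (t j) \<omega>)"
proof -
  have ab: "a ** b = mat 1" using ba by (metis matrix_left_right_inverse)
  have tmono: "t i \<le> t j" if "i \<le> j" "j \<le> n" for i j
    using that
  proof (induction j)
    case 0 then show ?case by simp
  next
    case (Suc j)
    then show ?case using mono[of j] by (cases "i = Suc j") auto
  qed
  have tpos: "j \<le> n \<Longrightarrow> 0 \<le> t j" for j using tmono[of 0 j] t0 by simp
  define I where "I = {1..n}"
  define Y where "Y i = incr (t (i - 1)) (t i)" for i
  define Y' where "Y' i = (\<lambda>\<omega>. a ** Y i \<omega> ** b)" for i
  have mY: "Y i \<in> borel_measurable M" if "i \<in> I" for i
    unfolding Y_def using that tpos tmono by (intro incr_meas) (auto simp: I_def)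
  have mY': "Y' i \<in> borel_measurable M" if "i \<in> I" for i
    unfolding Y'_def using measurable_comp[OF mY[OF that] conj_meas[of a b]] by (simp add: comp_def)
  have mRY: "(\<lambda>\<omega>. \<lambda>i\<in>I. Y i \<omega>) \<in> measurable M (PiM I (\<lambda>_. borel))"
    by (rule measurable_restrict) (rule mY)
  have mRY': "(\<lambda>\<omega>. \<lambda>i\<in>I. Y' i \<omega>) \<in> measurable M (PiM I (\<lambda>_. borel))"
    by (rule measurable_restrict) (rule mY')
  have JY: "distr M (PiM I (\<lambda>_. borel)) (\<lambda>\<omega>. \<lambda>i\<in>I. Y i \<omega>) = distr M (PiM I (\<lambda>_. borel)) (\<lambda>\<omega>. \<lambda>i\<in>I. Y' i \<omega>)"
  proof (cases "n = 0")
    case True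
    then have "I = {}" by (simp add: I_def)
    then show ?thesis by (intro distr_cong) auto
  next
    case False
    then have Ine: "I \<noteq> {}" by (simp add: I_def)
    have indY: "indep_vars (\<lambda>_. borel) Y I"
      unfolding Y_def I_def incr_def by (rule indep) (use t0 mono in auto)
    have indY': "indep_vars (\<lambda>_. borel) Y' I"
      unfolding Y'_def by (rule indep_vars_compose2[OF indY, where Y="\<lambda>_ A. a ** A ** b"]) (rule conj_meas)
    have marg: "distr M borel (Y' i) = distr M borel (Y i)" if "i \<in> I" for i
    proof -
      have i: "1 \<le> i" "i \<le> n" using that by (auto simp: I_def)
      have le: "0 \<le> t (i - 1)" "t (i - 1) \<le> t i" using i tpos tmono by auto
      have "distr M borel (Y' i) = distr M borel (\<lambda>\<omega>. a ** X (t i - t (i - 1)) \<omega> ** b)"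
        unfolding Y'_def Y_def
        by (rule distr_map_eq[OF _ _ conj_meas incr_law]) (use le in \<open>auto intro: incr_meas\<close>)
      also have "\<dots> = distr M borel (X (t i - t (i - 1)))" using inv i by blast
      also have "\<dots> = distr M borel (Y i)" unfolding Y_def using incr_law le by simp
      finally show ?thesis .
    qed
    have "distr M (PiM I (\<lambda>_. borel)) (\<lambda>\<omega>. \<lambda>i\<in>I. Y i \<omega>) = PiM I (\<lambda>i. distr M borel (Y i))"
      using indep_vars_iff_distr_eq_PiM'[OF Ine mY] indY by simp
    also have "\<dots> = PiM I (\<lambda>i. distr M borel (Y' i))"
      using marg by (intro PiM_cong) auto
    also have "\<dots> = distr M (PiM I (\<lambda>_. borel)) (\<lambda>\<omega>. \<lambda>i\<in>I. Y' i \<omega>)"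
      using indep_vars_iff_distr_eq_PiM'[OF Ine mY'] indY' by simp
    finally show ?thesis .
  qed
  define \<Phi> where "\<Phi> y = (\<lambda>j\<in>{..n}. mprod y j)" for y :: "nat \<Rightarrow> 'n mat"
  have m\<Phi>: "\<Phi> \<in> measurable (PiM I (\<lambda>_. borel)) (PiM {..n} (\<lambda>_. borel))"
    unfolding \<Phi>_def I_def by (rule measurable_restrict) (rule mprod_meas, simp)
  have pX: "mprod (\<lambda>i\<in>I. Y i \<omega>) j = X (t j) \<omega>" if "\<omega> \<in> space M" "j \<le> n" for \<omega> j
    using that(2)
  proof (induction j)
    case 0 then show ?case using X0[OF that(1)] t0 by simp
  next
    case (Suc j)
    have "invertible (X (t j) \<omega>)" using G_inv XG tpos Suc.prems that(1) by auto
    then show ?case using Suc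
      by (simp add: I_def Y_def incr_def matrix_mul_assoc inv_right)
  qed
  have pX': "mprod (\<lambda>i\<in>I. Y' i \<omega>) j = a ** X (t j) \<omega> ** b" if "\<omega> \<in> space M" "j \<le> n" for \<omega> j
    using that(2)
  proof (induction j)
    case 0 then show ?case using X0[OF that(1)] t0 ab by simp
  next
    case (Suc j)
    have "invertible (X (t j) \<omega>)" using G_inv XG tpos Suc.prems that(1) by auto
    then have "(a ** X (t j) \<omega> ** b) ** (a ** (matrix_inv (X (t j) \<omega>) ** X (t (Suc j)) \<omega>) ** b)
           = a ** X (t (Suc j)) \<omega> ** b"
    proof -
      have h1: "b ** (a ** Z) = Z" for Z using ba by (simp add: matrix_mul_assoc)
      have h2: "X (t j) \<omega> ** (matrix_inv (X (t j) \<omega>) ** Z) = Z" for Z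
        using \<open>invertible (X (t j) \<omega>)\<close> by (simp add: matrix_mul_assoc inv_right)
      show ?thesis by (simp add: matrix_mul_assoc[symmetric] h1 h2)
    qed
    then show ?case using Suc
      by (simp add: I_def Y'_def Y_def incr_def)
  qed
  have "distr M (PiM {..n} (\<lambda>_. borel)) (\<lambda>\<omega>. \<lambda>j\<in>{..n}. a ** X (t j) \<omega> ** b)
      = distr M (PiM {..n} (\<lambda>_. borel)) (\<lambda>\<omega>. \<Phi> (\<lambda>i\<in>I. Y' i \<omega>))"
    by (rule distr_cong) (auto simp: \<Phi>_def pX')
  also have "\<dots> = distr M (PiM {..n} (\<lambda>_. borel)) (\<lambda>\<omega>. \<Phi> (\<lambda>i\<in>I. Y i \<omega>))"
    by (rule distr_map_eq[OF mRY' mRY m\<Phi> JY[symmetric]])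
  also have "\<dots> = distr M (PiM {..n} (\<lambda>_. borel)) (\<lambda>\<omega>. \<lambda>j\<in>{..n}. X (t j) \<omega>)"
    by (rule distr_cong) (auto simp: \<Phi>_def pX)
  finally show ?thesis .
qed

end

context levy begin

lemma telescope:
  assumes t0: "t 0 = 0" and mono: "\<And>i. i < n \<Longrightarrow> t i \<le> t (Suc i)" and \<omega>: "\<omega> \<in> space M"
    and jn: "j \<le> n"
  shows "mprod (\<lambda>i. incr (t (i - 1)) (t i) \<omega>) j = X (t j) \<omega>"
proof -
  have tmono: "t i \<le> t j" if "i \<le> j" "j \<le> n" for i j
    using that
  proof (induction j)
    case 0 then show ?case by simp
  next
    case (Suc j)
    then show ?case using mono[of j] by (cases "i = Suc j") auto
  qed
  have tpos: "j \<le> n \<Longrightarrow> 0 \<le> t j" for j using tmono[of 0 j] t0 by simp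
  show ?thesis using jn
  proof (induction j)
    case 0 then show ?case using X0[OF \<omega>] t0 by simp
  next
    case (Suc j)
    have "invertible (X (t j) \<omega>)" using G_inv XG tpos Suc.prems \<omega> by auto
    then show ?case using Suc
      by (simp add: incr_def matrix_mul_assoc inv_right)
  qed
qed

lemma Inv_zero: "g \<in> G \<Longrightarrow> Inv 0 g"
  unfolding Inv_def
  by (rule distr_cong) (auto simp: X0 inv_right G_inv)

lemma Inv_one: "Inv s (mat 1)"
  unfolding Inv_def by (simp add: inv_one)

lemma stepb:
  assumes d: "d \<ge> 0" and g: "g \<in> G" and inv: "Inv d g"
  shows "Inv (real m * d) g"
proof (cases "d = 0 \<or> m = 0")
  case True
  then have "real m * d = 0" by auto
  then show ?thesis using Inv_zero[OF g] by metis
next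
  case False
  then have dpos: "d > 0" "m > 0" using d by auto
  define t where "t i = real i * d" for i
  have diff: "t i - t (i - 1) = d" if "1 \<le> i" for i
    using that by (simp add: t_def of_nat_diff algebra_simps)
  have F: "distr M (PiM {..m} (\<lambda>_. borel)) (\<lambda>\<omega>. \<lambda>j\<in>{..m}. g ** X (t j) \<omega> ** matrix_inv g)
       = distr M (PiM {..m} (\<lambda>_. borel)) (\<lambda>\<omega>. \<lambda>j\<in>{..m}. X (t j) \<omega>)"
  proof (rule fdd_conj)
    show "matrix_inv g ** g = mat 1" using G_inv[OF g] by (rule inv_left)
    show "t 0 = 0" by (simp add: t_def)
    show "t i < t (Suc i)" for i using dpos by (simp add: t_def algebra_simps)
    show "distr M borel (\<lambda>\<omega>. g ** X (t i - t (i - 1)) \<omega> ** matrix_inv g) = distr M borel (X (t i - t (i - 1)))"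
      if "1 \<le> i" for i using diff[OF that] inv unfolding Inv_def by simp
  qed
  have tpos: "0 \<le> t j" for j using d by (simp add: t_def)
  have m1: "(\<lambda>\<omega>. \<lambda>j\<in>{..m}. g ** X (t j) \<omega> ** matrix_inv g) \<in> measurable M (PiM {..m} (\<lambda>_. borel))"
    by (rule measurable_restrict) (rule measurable_comp[OF mX[OF tpos] conj_meas, unfolded comp_def])
  have m2: "(\<lambda>\<omega>. \<lambda>j\<in>{..m}. X (t j) \<omega>) \<in> measurable M (PiM {..m} (\<lambda>_. borel))"
    by (rule measurable_restrict) (rule mX[OF tpos])
  have "distr M borel (\<lambda>\<omega>. (\<lambda>j\<in>{..m}. g ** X (t j) \<omega> ** matrix_inv g) m)
      = distr M borel (\<lambda>\<omega>. (\<lambda>j\<in>{..m}. X (t j) \<omega>) m)"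
    by (rule distr_map_eq[OF m1 m2 measurable_component_singleton F]) simp
  then show ?thesis unfolding Inv_def t_def by simp
qed

lemma stepa:
  assumes d: "d \<ge> 0" and SInv: "\<And>h. h \<in> S d \<Longrightarrow> Inv d h" and g: "g \<in> S (real m * d)"
  shows "Inv d g"
proof -
  define t where "t i = real i * d" for i
  have tpos: "0 \<le> t j" for j using d by (simp add: t_def)
  have tmono: "t i \<le> t (Suc i)" for i using d by (simp add: t_def algebra_simps)
  have diff: "t i - t (i - 1) = d" if "1 \<le> i" for i
    using that by (simp add: t_def of_nat_diff algebra_simps)
  have SK: "S d \<subseteq> K d"
    unfolding K_def using S_G[OF d] SInv Inv_Inv'[OF d] G_inv by blast
  define Y where "Y i = incr (t (i - 1)) (t i)" for i
  have mY: "Y i \<in> borel_measurable M" for i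
    unfolding Y_def by (rule incr_meas) (use tpos d in \<open>auto simp: t_def intro!: mult_right_mono\<close>)
  have lawY: "distr M borel (Y i) = distr M borel (X d)" if "1 \<le> i" for i
    unfolding Y_def using incr_law[of "t (i - 1)" "t i"] diff[OF that] tpos
    by (simp add: t_def mult_right_mono d)
  have cS: "- S d \<in> sets borel" using closed_supp[of M "X d"] by (simp add: borel_closed borel_comp)
  have AEi: "AE \<omega> in M. Y i \<omega> \<in> S d" if "1 \<le> i" for i
  proof (rule AE_I')
    have "emeasure M (Y i -` (- S d) \<inter> space M) = emeasure (distr M borel (Y i)) (- S d)"
      using mY cS by (simp add: emeasure_distr)
    also have "\<dots> = emeasure (distr M borel (X d)) (- S d)" using lawY[OF that] by simp
    also have "\<dots> = emeasure M (X d -` (- S d) \<inter> space M)"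
      using mX[OF d] cS by (simp add: emeasure_distr)
    also have "\<dots> = 0" by (rule supp_full[OF mX[OF d]])
    finally show "Y i -` (- S d) \<inter> space M \<in> null_sets M"
      using measurable_sets[OF mY cS] by (simp add: null_sets_def)
  qed auto
  have AEall: "AE \<omega> in M. \<forall>i\<in>{1..m}. Y i \<omega> \<in> S d"
    by (rule AE_finite_allI) (use AEi in auto)
  have Kprod: "mprod (\<lambda>i. Y i \<omega>) j \<in> K d" if "\<forall>i\<in>{1..m}. Y i \<omega> \<in> S d" "j \<le> m" for \<omega> j
    using that(2)
  proof (induction j)
    case 0 then show ?case unfolding K_def using G_one Inv'_one by simp
  next
    case (Suc j)
    then have "Y (Suc j) \<omega> \<in> K d" using that(1) SK by auto
    with Suc show ?case unfolding K_def using G_mult Inv'_mult[OF d] by auto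
  qed
  have AEK: "AE \<omega> in M. X (t m) \<omega> \<in> K d"
    using AEall
  proof (rule AE_mp, intro AE_I2 impI)
    fix \<omega> assume \<omega>: "\<omega> \<in> space M" and H: "\<forall>i\<in>{1..m}. Y i \<omega> \<in> S d"
    have "X (t m) \<omega> = mprod (\<lambda>i. Y i \<omega>) m"
      unfolding Y_def by (rule telescope[symmetric, of t m]) (use tmono \<omega> in \<open>auto simp: t_def\<close>)
    then show "X (t m) \<omega> \<in> K d" using Kprod[OF H] by simp
  qed
  show ?thesis
  proof (rule ccontr)
    assume ng: "\<not> Inv d g"
    have gG: "g \<in> G" using g S_G[of "real m * d"] d by auto
    have "g \<notin> K d" using ng Inv_Inv'[OF d G_inv[OF gG]] unfolding K_def by auto
    then have "open (- K d)" "g \<in> - K d" using closed_K[OF d] by auto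
    then have pos: "emeasure M (X (t m) -` (- K d) \<inter> space M) > 0"
      using g unfolding supp_def t_def by blast
    obtain N where N: "{\<omega> \<in> space M. \<not> X (t m) \<omega> \<in> K d} \<subseteq> N" "emeasure M N = 0" "N \<in> sets M"
      using AEK by (rule AE_E)
    have "X (t m) -` (- K d) \<inter> space M \<subseteq> N" using N(1) by auto
    then have "emeasure M (X (t m) -` (- K d) \<inter> space M) \<le> emeasure M N"
      by (rule emeasure_mono) (rule N(3))
    then show False using pos N(2) by simp
  qed
qed

end

context levy begin

lemma right_cont: "\<omega> \<in> space M \<Longrightarrow> t \<ge> 0 \<Longrightarrow> continuous (at_right t) (\<lambda>s. X s \<omega>)"
  using lp unfolding levy_process_def by blast

lemma two_imp:
  assumes H2: "\<And>t g. t \<ge> 0 \<Longrightarrow> g \<in> S t \<Longrightarrow> Inv t g"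
    and s: "s \<ge> 0" and u: "u \<ge> 0" and g: "g \<in> S u"
  shows "Inv s g"
proof (cases "u = 0")
  case True
  then show ?thesis using g S0 Inv_one by auto
next
  case False
  then have upos: "u > 0" using u by simp
  have gG: "g \<in> G" using g S_G[OF u] by auto
  define d where "d k = u / real (Suc k)" for k
  have dpos: "d k > 0" for k using upos by (simp add: d_def)
  have rat: "Inv (real m * d k) g" for k m
  proof -
    have "real (Suc k) * d k = u" by (simp add: d_def)
    then have "g \<in> S (real (Suc k) * d k)" using g by simp
    then have "Inv (d k) g"
      using stepa[OF less_imp_le[OF dpos[of k]], of g "Suc k"] H2[of "d k"] dpos[of k] by auto
    then show ?thesis by (rule stepb[OF less_imp_le[OF dpos] gG])
  qed
  define q where "q k = real (nat \<lfloor>s / d k\<rfloor> + 1) * d k" for k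
  have qb: "s < q k \<and> q k \<le> s + d k" for k
  proof -
    have fl: "of_int \<lfloor>s / d k\<rfloor> \<le> s / d k" "s / d k < of_int \<lfloor>s / d k\<rfloor> + 1"
      by linarith+
    have nn: "0 \<le> \<lfloor>s / d k\<rfloor>" using s dpos[of k] by simp
    then have eq: "real (nat \<lfloor>s / d k\<rfloor> + 1) = of_int \<lfloor>s / d k\<rfloor> + 1" by simp
    have "s < (of_int \<lfloor>s / d k\<rfloor> + 1) * d k"
      using fl(2) dpos[of k] by (simp add: field_simps)
    moreover have "(of_int \<lfloor>s / d k\<rfloor> + 1) * d k \<le> s + d k"
    proof -
      have "of_int \<lfloor>s / d k\<rfloor> * d k \<le> s / d k * d k"
        using fl(1) dpos[of k] by (intro mult_right_mono) auto
      also have "s / d k * d k = s" using dpos[of k] by simp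
      finally show ?thesis by (simp add: algebra_simps)
    qed
    ultimately show ?thesis unfolding q_def eq by simp
  qed
  have dlim: "d \<longlonglongrightarrow> 0"
    unfolding d_def using LIMSEQ_Suc[OF lim_const_over_n[of u]] by simp
  have qlim: "q \<longlonglongrightarrow> s"
  proof (rule tendsto_sandwich[where f="\<lambda>_. s" and h="\<lambda>k. s + d k"])
    show "\<forall>\<^sub>F n in sequentially. s \<le> q n" using qb by (intro always_eventually allI) (auto intro: less_imp_le)
    show "\<forall>\<^sub>F n in sequentially. q n \<le> s + d n" using qb by (intro always_eventually allI) auto
    show "(\<lambda>k. s + d k) \<longlonglongrightarrow> s" using tendsto_add[OF tendsto_const dlim] by simp
  qed simp
  have qr: "filterlim q (at_right s) sequentially"
    by (rule tendsto_imp_filterlim_at_right[OF qlim]) (use qb in \<open>intro always_eventually allI, auto\<close>)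
  have qpos: "0 \<le> q k" for k using qb[of k] s by auto
  have Xlim: "(\<lambda>k. X (q k) \<omega>) \<longlonglongrightarrow> X s \<omega>" if "\<omega> \<in> space M" for \<omega>
  proof -
    have "((\<lambda>t. X t \<omega>) \<longlongrightarrow> X s \<omega>) (at_right s)"
      using right_cont[OF that s] by (simp add: continuous_within)
    from filterlim_compose[OF this qr] show ?thesis .
  qed
  show ?thesis
    unfolding Inv_def
  proof (rule distr_eq_limit[where A="\<lambda>k \<omega>. g ** X (q k) \<omega> ** matrix_inv g" and B="\<lambda>k. X (q k)"])
    show "prob_space M" by (rule P)
    show "(\<lambda>\<omega>. g ** X (q k) \<omega> ** matrix_inv g) \<in> borel_measurable M" for k
      using measurable_comp[OF mX[OF qpos] conj_meas] by (simp add: comp_def)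
    show "(\<lambda>\<omega>. g ** X s \<omega> ** matrix_inv g) \<in> borel_measurable M"
      using measurable_comp[OF mX[OF s] conj_meas] by (simp add: comp_def)
    show "X (q k) \<in> borel_measurable M" for k by (rule mX[OF qpos])
    show "X s \<in> borel_measurable M" by (rule mX[OF s])
    show "(\<lambda>k. g ** X (q k) \<omega> ** matrix_inv g) \<longlonglongrightarrow> g ** X s \<omega> ** matrix_inv g" if "\<omega> \<in> space M" for \<omega>
      by (intro tendsto_mmult tendsto_const Xlim[OF that])
    show "(\<lambda>k. X (q k) \<omega>) \<longlonglongrightarrow> X s \<omega>" if "\<omega> \<in> space M" for \<omega> by (rule Xlim[OF that])
    show "distr M borel (\<lambda>\<omega>. g ** X (q k) \<omega> ** matrix_inv g) = distr M borel (X (q k))" for k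
      using rat[of "nat \<lfloor>s / d k\<rfloor> + 1" k] unfolding Inv_def q_def by simp
  qed
qed

end

lemma pl_emb:
  assumes mY: "\<And>t. t \<ge> 0 \<Longrightarrow> Y t \<in> borel_measurable M" and J: "J \<subseteq> {0..}" "finite J"
    and A: "\<And>j. j \<in> J \<Longrightarrow> A j \<in> sets borel"
  shows "emeasure (process_law M Y) (prod_emb {0..} (\<lambda>_. borel) J (PiE J A))
       = emeasure M {\<omega>\<in>space M. \<forall>j\<in>J. Y j \<omega> \<in> A j}"
proof -
  have m: "(\<lambda>\<omega>. restrict (\<lambda>t. Y t \<omega>) {0..}) \<in> measurable M (PiM {0..} (\<lambda>_. borel))"
    by (rule measurable_restrict) (use mY in auto)
  have s: "prod_emb {0..} (\<lambda>_. borel) J (PiE J A) \<in> sets (PiM {0..} (\<lambda>_. borel))"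
    by (rule sets_PiM_I) (use J A in auto)
  have "(\<lambda>\<omega>. restrict (\<lambda>t. Y t \<omega>) {0..}) -` prod_emb {0..} (\<lambda>_. borel) J (PiE J A) \<inter> space M
      = {\<omega>\<in>space M. \<forall>j\<in>J. Y j \<omega> \<in> A j}"
    using J(1) by (auto simp: prod_emb_iff PiE_iff subset_iff)
  then show ?thesis unfolding process_law_def using m s by (simp add: emeasure_distr)
qed

context levy begin

lemma fin_event_eq:
  assumes ba: "b ** a = mat 1"
    and inv: "\<And>s. s \<ge> 0 \<Longrightarrow> distr M borel (\<lambda>\<omega>. a ** X s \<omega> ** b) = distr M borel (X s)"
    and J: "finite J" "J \<subseteq> {0..}" and A: "\<And>j. j \<in> J \<Longrightarrow> A j \<in> sets borel"
  shows "emeasure M {\<omega>\<in>space M. \<forall>j\<in>J. a ** X j \<omega> ** b \<in> A j} = emeasure M {\<omega>\<in>space M. \<forall>j\<in>J. X j \<omega> \<in> A j}"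
proof -
  define L where "L = sorted_list_of_set (insert 0 J)"
  define n where "n = length L - 1"
  define t where "t i = L ! i" for i
  have fin: "finite (insert 0 J)" using J by simp
  have setL: "set L = insert 0 J" unfolding L_def by (rule set_sorted_list_of_set[OF fin])
  have ssL: "sorted_wrt (<) L" unfolding L_def by (rule strict_sorted_list_of_set)
  have lenL: "length L = Suc n" unfolding n_def using setL by (cases L) auto
  have Min0: "Min (insert 0 J) = 0" using J fin by (intro Min_eqI) auto
  have t0: "t 0 = 0" unfolding t_def L_def using sorted_list_of_set_nonempty[OF fin] Min0 by simp
  have strict: "t i < t (Suc i)" if "i < n" for i
    unfolding t_def by (rule sorted_wrt_nth_less[OF ssL]) (use that lenL in auto)
  have tin: "t i \<in> insert 0 J" if "i \<le> n" for i
    unfolding t_def using that lenL setL nth_mem[of i L] by auto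
  have tpos: "0 \<le> t i" if "i \<le> n" for i using tin[OF that] J by auto
  have allJ: "\<exists>i\<le>n. t i = j" if "j \<in> J" for j
  proof -
    have "j \<in> set L" using that setL by auto
    then obtain i where "i < length L" "L ! i = j" by (auto simp: in_set_conv_nth)
    then show ?thesis using lenL unfolding t_def by (intro exI[of _ i]) auto
  qed
  have F: "distr M (PiM {..n} (\<lambda>_. borel)) (\<lambda>\<omega>. \<lambda>j\<in>{..n}. a ** X (t j) \<omega> ** b)
       = distr M (PiM {..n} (\<lambda>_. borel)) (\<lambda>\<omega>. \<lambda>j\<in>{..n}. X (t j) \<omega>)"
  proof (rule fdd_conj[OF ba t0 strict])
    fix i assume i: "1 \<le> i" "i \<le> n"
    have "t (i - 1) < t i" using strict[of "i - 1"] i by simp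
    then show "distr M borel (\<lambda>\<omega>. a ** X (t i - t (i - 1)) \<omega> ** b) = distr M borel (X (t i - t (i - 1)))"
      by (intro inv) simp
  qed simp
  define B where "B = PiE {..n} (\<lambda>i. if t i \<in> J then A (t i) else UNIV)"
  have Bs: "B \<in> sets (PiM {..n} (\<lambda>_. borel))"
    unfolding B_def by (rule sets_PiM_I_finite) (use A in auto)
  have m1: "(\<lambda>\<omega>. \<lambda>j\<in>{..n}. a ** X (t j) \<omega> ** b) \<in> measurable M (PiM {..n} (\<lambda>_. borel))"
    by (rule measurable_restrict) (rule measurable_comp[OF mX[OF tpos] conj_meas, unfolded comp_def], simp)
  have m2: "(\<lambda>\<omega>. \<lambda>j\<in>{..n}. X (t j) \<omega>) \<in> measurable M (PiM {..n} (\<lambda>_. borel))"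
    by (rule measurable_restrict) (rule mX[OF tpos], simp)
  have pre: "(\<lambda>\<omega>. \<lambda>j\<in>{..n}. Z (t j) \<omega>) -` B \<inter> space M = {\<omega>\<in>space M. \<forall>j\<in>J. Z j \<omega> \<in> A j}"
    for Z :: "real \<Rightarrow> 'a \<Rightarrow> 'n mat"
  proof -
    have "(\<forall>i\<in>{..n}. Z (t i) \<omega> \<in> (if t i \<in> J then A (t i) else UNIV)) \<longleftrightarrow> (\<forall>j\<in>J. Z j \<omega> \<in> A j)" for \<omega>
      using allJ by (auto split: if_splits)
    then show ?thesis unfolding B_def by (auto simp: PiE_iff simp del: atMost_iff)
  qed
  have "emeasure M {\<omega>\<in>space M. \<forall>j\<in>J. a ** X j \<omega> ** b \<in> A j}
      = emeasure M ((\<lambda>\<omega>. \<lambda>j\<in>{..n}. a ** X (t j) \<omega> ** b) -` B \<inter> space M)"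
    using pre[of "\<lambda>s \<omega>. a ** X s \<omega> ** b"] by simp
  also have "\<dots> = emeasure (distr M (PiM {..n} (\<lambda>_. borel)) (\<lambda>\<omega>. \<lambda>j\<in>{..n}. a ** X (t j) \<omega> ** b)) B"
    using m1 Bs by (simp add: emeasure_distr)
  also have "\<dots> = emeasure (distr M (PiM {..n} (\<lambda>_. borel)) (\<lambda>\<omega>. \<lambda>j\<in>{..n}. X (t j) \<omega>)) B"
    using F by simp
  also have "\<dots> = emeasure M ((\<lambda>\<omega>. \<lambda>j\<in>{..n}. X (t j) \<omega>) -` B \<inter> space M)"
    using m2 Bs by (simp add: emeasure_distr)
  also have "\<dots> = emeasure M {\<omega>\<in>space M. \<forall>j\<in>J. X j \<omega> \<in> A j}"
    using pre[of X] by simp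
  finally show ?thesis .
qed

lemma process_law_eq:
  assumes ba: "b ** a = mat 1"
    and inv: "\<And>s. s \<ge> 0 \<Longrightarrow> distr M borel (\<lambda>\<omega>. a ** X s \<omega> ** b) = distr M borel (X s)"
  shows "process_law M (\<lambda>t \<omega>. a ** X t \<omega> ** b) = process_law M X"
proof (rule measure_eqI_PiM_infinite)
  have mA: "(\<lambda>\<omega>. a ** X t \<omega> ** b) \<in> borel_measurable M" if "t \<ge> 0" for t
    using measurable_comp[OF mX[OF that] conj_meas] by (simp add: comp_def)
  show "sets (process_law M (\<lambda>t \<omega>. a ** X t \<omega> ** b)) = sets (PiM {0..} (\<lambda>_. borel))"
    "sets (process_law M X) = sets (PiM {0..} (\<lambda>_. borel))"
    unfolding process_law_def by simp_all
  show "finite_measure (process_law M (\<lambda>t \<omega>. a ** X t \<omega> ** b))"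
  proof -
    have "(\<lambda>\<omega>. restrict (\<lambda>t. a ** X t \<omega> ** b) {0..}) \<in> measurable M (PiM {0..} (\<lambda>_. borel))"
      by (rule measurable_restrict) (use mA in auto)
    from prob_space_distr[OF this] show ?thesis unfolding process_law_def by (simp add: prob_space_def)
  qed
  fix A :: "real \<Rightarrow> 'n mat set" and J :: "real set" assume J: "finite J" "J \<subseteq> {0..}" and A: "\<And>i. i \<in> J \<Longrightarrow> A i \<in> sets borel"
  show "emeasure (process_law M (\<lambda>t \<omega>. a ** X t \<omega> ** b)) (prod_emb {0..} (\<lambda>_. borel) J (PiE J A))
      = emeasure (process_law M X) (prod_emb {0..} (\<lambda>_. borel) J (PiE J A))"
    using pl_emb[of "\<lambda>t \<omega>. a ** X t \<omega> ** b" M J A, OF mA J(2,1) A] pl_emb[of X M J A, OF mX J(2,1) A]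
      fin_event_eq[OF ba inv J A] by simp
qed

end

context levy begin

lemma aic_imp:
  assumes aic: "auto_inv_conj_increments M X" and s: "s \<ge> 0" and u: "u \<ge> 0" and g: "g \<in> S u"
  shows "Inv s g"
proof -
  define t :: "nat \<Rightarrow> real" where "t i = (if i = 0 then 0 else if i = 1 then s else s + u)" for i
  have "auto_inv_conj M {1..2} (\<lambda>i \<omega>. matrix_inv (X (t (i - 1)) \<omega>) ** X (t i) \<omega>)"
    using aic unfolding auto_inv_conj_increments_def
    by (elim allE[of _ 2] allE[of _ t] impE) (use s u in \<open>auto simp: t_def less_Suc_eq\<close>)
  then have H: "\<And>g'. g' \<in> supp M (\<lambda>\<omega>. matrix_inv (X s \<omega>) ** X (s + u) \<omega>) \<Longrightarrow>
      distr M borel (\<lambda>\<omega>. g' ** (matrix_inv (X 0 \<omega>) ** X s \<omega>) ** matrix_inv g') =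
      distr M borel (\<lambda>\<omega>. matrix_inv (X 0 \<omega>) ** X s \<omega>)"
    unfolding auto_inv_conj_def by (elim ballE[of _ _ 1] ballE[of _ _ 2]) (auto simp: t_def)
  have "supp M (\<lambda>\<omega>. matrix_inv (X s \<omega>) ** X (s + u) \<omega>) = S u"
    using supp_incr[of s "s + u"] s u unfolding incr_def by simp
  then have "distr M borel (\<lambda>\<omega>. g ** (matrix_inv (X 0 \<omega>) ** X s \<omega>) ** matrix_inv g) =
      distr M borel (\<lambda>\<omega>. matrix_inv (X 0 \<omega>) ** X s \<omega>)" using H g by simp
  moreover have "distr M borel (\<lambda>\<omega>. g ** (matrix_inv (X 0 \<omega>) ** X s \<omega>) ** matrix_inv g)
      = distr M borel (\<lambda>\<omega>. g ** X s \<omega> ** matrix_inv g)"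
    by (rule distr_cong) (auto simp: X0 inv_one)
  moreover have "distr M borel (\<lambda>\<omega>. matrix_inv (X 0 \<omega>) ** X s \<omega>) = distr M borel (X s)"
    by (rule distr_cong) (auto simp: X0 inv_one)
  ultimately show ?thesis unfolding Inv_def by simp
qed

lemma mono_le:
  assumes "\<And>i. i < n \<Longrightarrow> (t::nat \<Rightarrow> real) i \<le> t (Suc i)" "i \<le> j" "j \<le> n"
  shows "t i \<le> t j"
  using assms(2,3)
proof (induction j)
  case 0 then show ?case by simp
next
  case (Suc j)
  then show ?case using assms(1)[of j] by (cases "i = Suc j") auto
qed

lemma imp_aic:
  assumes H: "\<And>s u g. s \<ge> 0 \<Longrightarrow> u \<ge> 0 \<Longrightarrow> g \<in> S u \<Longrightarrow> Inv s g"
  shows "auto_inv_conj_increments M X"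
  unfolding auto_inv_conj_increments_def auto_inv_conj_def
proof (intro allI impI ballI, elim conjE)
  fix k :: nat and t :: "nat \<Rightarrow> real" and i j g
  assume t0: "t 0 = 0" and mono: "\<forall>i<k. t i \<le> t (Suc i)" and i: "i \<in> {1..k}" and j: "j \<in> {1..k}"
    and g: "g \<in> supp M (\<lambda>\<omega>. matrix_inv (X (t (j - 1)) \<omega>) ** X (t j) \<omega>)"
  have tm: "t a \<le> t b" if "a \<le> b" "b \<le> k" for a b using mono_le[of k t a b] mono that by auto
  have tp: "0 \<le> t a" if "a \<le> k" for a using tm[of 0 a] t0 that by simp
  have j1: "0 \<le> t (j - 1)" "t (j - 1) \<le> t j" using j tp tm by auto
  have i1: "0 \<le> t (i - 1)" "t (i - 1) \<le> t i" using i tp tm by auto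
  have gS: "g \<in> S (t j - t (j - 1))" using g supp_incr[OF j1] unfolding incr_def by simp
  have gI: "Inv (t i - t (i - 1)) g" by (rule H[OF _ _ gS]) (use i1 j1 in auto)
  have "distr M borel (\<lambda>\<omega>. g ** incr (t (i - 1)) (t i) \<omega> ** matrix_inv g)
      = distr M borel (\<lambda>\<omega>. g ** X (t i - t (i - 1)) \<omega> ** matrix_inv g)"
    by (rule distr_map_eq[OF _ _ conj_meas incr_law]) (use i1 in \<open>auto intro: incr_meas\<close>)
  also have "\<dots> = distr M borel (X (t i - t (i - 1)))" using gI unfolding Inv_def .
  also have "\<dots> = distr M borel (incr (t (i - 1)) (t i))" using incr_law[OF i1] by simp
  finally show "distr M borel (\<lambda>\<omega>. g ** (matrix_inv (X (t (i - 1)) \<omega>) ** X (t i) \<omega>) ** matrix_inv g) =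
         distr M borel (\<lambda>\<omega>. matrix_inv (X (t (i - 1)) \<omega>) ** X (t i) \<omega>)"
    unfolding incr_def .
qed

lemma P3_imp:
  assumes P3: "\<forall>g\<in>H_X M X. process_law M (\<lambda>t \<omega>. matrix_inv g ** X t \<omega> ** g) = process_law M X"
    and s: "s \<ge> 0" and u: "u \<ge> 0" and g: "g \<in> S u"
  shows "Inv s g"
proof -
  have gG: "g \<in> G" using g S_G[OF u] by auto
  have "g \<in> gen_subgroup (\<Union>t\<in>{0..}. S t)" using g u gen_subgroup_sub by fastforce
  then have "matrix_inv g \<in> H_X M X"
    unfolding H_X_def using gen_subgroup_inv closure_subset by blast
  then have PL: "process_law M (\<lambda>t \<omega>. g ** X t \<omega> ** matrix_inv g) = process_law M X"
    using P3 inv_inv[OF G_inv[OF gG]] by fastforce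
  have proj: "distr (process_law M Y) borel (\<lambda>f. f s) = distr M borel (Y s)"
    if mY: "\<And>t. t \<ge> 0 \<Longrightarrow> Y t \<in> borel_measurable M" for Y
  proof -
    have m: "(\<lambda>\<omega>. restrict (\<lambda>t. Y t \<omega>) {0..}) \<in> measurable M (PiM {0..} (\<lambda>_. borel))"
      by (rule measurable_restrict) (use mY in auto)
    have "distr (process_law M Y) borel (\<lambda>f. f s) = distr M borel ((\<lambda>f. f s) \<circ> (\<lambda>\<omega>. restrict (\<lambda>t. Y t \<omega>) {0..}))"
      unfolding process_law_def
      by (rule distr_distr[OF measurable_component_singleton m]) (use s in simp)
    also have "\<dots> = distr M borel (Y s)" using s by (simp add: comp_def)
    finally show ?thesis .
  qed
  have mA: "(\<lambda>\<omega>. g ** X t \<omega> ** matrix_inv g) \<in> borel_measurable M" if "t \<ge> 0" for t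
    using measurable_comp[OF mX[OF that] conj_meas] by (simp add: comp_def)
  have "distr M borel (\<lambda>\<omega>. g ** X s \<omega> ** matrix_inv g) = distr M borel (X s)"
    using proj[of "\<lambda>t \<omega>. g ** X t \<omega> ** matrix_inv g", OF mA] proj[of X, OF mX] PL by simp
  then show ?thesis unfolding Inv_def .
qed

lemma imp_P3:
  assumes H: "\<And>s u g. s \<ge> 0 \<Longrightarrow> u \<ge> 0 \<Longrightarrow> g \<in> S u \<Longrightarrow> Inv s g" and g: "g \<in> H_X M X"
  shows "process_law M (\<lambda>t \<omega>. matrix_inv g ** X t \<omega> ** g) = process_law M X"
proof (rule process_law_eq)
  have gG: "g \<in> G" using g HX_sub_G by auto
  show "g ** matrix_inv g = mat 1" by (rule inv_right[OF G_inv[OF gG]])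
  fix s :: real assume s: "s \<ge> 0"
  have "H_X M X \<subseteq> K s"
  proof (rule HX_sub_K[OF s])
    fix t h assume "t \<ge> 0" "h \<in> S t"
    then show "Inv' s h" using H[OF s] Inv_Inv'[OF s] G_inv S_G by blast
  qed
  then have "Inv' s g" using g unfolding K_def by auto
  then have "Inv' s (matrix_inv g)" by (rule Inv'_inv[OF s _ G_inv[OF gG]])
  then have "Inv s (matrix_inv g)" using Inv_Inv'[OF s invertible_inv[OF G_inv[OF gG]]] by simp
  then show "distr M borel (\<lambda>\<omega>. matrix_inv g ** X s \<omega> ** g) = distr M borel (X s)"
    unfolding Inv_def using inv_inv[OF G_inv[OF gG]] by simp
qed

end

theorem proposition8p22:
  fixes M :: "'a measure" and G :: "('n::finite) mat set" and X :: "real \<Rightarrow> 'a \<Rightarrow> 'n mat"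
  assumes "compact_matrix_group G"
    and "levy_process M G X"
  shows "(auto_inv_conj_increments M X
            \<longleftrightarrow> (\<forall>t\<ge>0. \<forall>g\<in>supp M (X t).
                  distr M borel (\<lambda>\<omega>. g ** X t \<omega> ** matrix_inv g) = distr M borel (X t)))
       \<and> (auto_inv_conj_increments M X
            \<longleftrightarrow> (\<forall>g\<in>H_X M X.
                  process_law M (\<lambda>t \<omega>. matrix_inv g ** X t \<omega> ** g) = process_law M X))"
proof -
  interpret levy M G X using assms by unfold_locales
  have A: "auto_inv_conj_increments M X \<longleftrightarrow> (\<forall>s\<ge>0. \<forall>u\<ge>0. \<forall>g\<in>S u. Inv s g)"
  proof
    assume "auto_inv_conj_increments M X"
    then show "\<forall>s\<ge>0. \<forall>u\<ge>0. \<forall>g\<in>S u. Inv s g" by (intro allI impI ballI) (rule aic_imp)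
  next
    assume "\<forall>s\<ge>0. \<forall>u\<ge>0. \<forall>g\<in>S u. Inv s g"
    then show "auto_inv_conj_increments M X" by (intro imp_aic) simp
  qed
  have B: "(\<forall>s\<ge>0. \<forall>u\<ge>0. \<forall>g\<in>S u. Inv s g) \<longleftrightarrow> (\<forall>t\<ge>0. \<forall>g\<in>S t. Inv t g)"
  proof
    assume "\<forall>s\<ge>0. \<forall>u\<ge>0. \<forall>g\<in>S u. Inv s g"
    then show "\<forall>t\<ge>0. \<forall>g\<in>S t. Inv t g" by simp
  next
    assume "\<forall>t\<ge>0. \<forall>g\<in>S t. Inv t g"
    then show "\<forall>s\<ge>0. \<forall>u\<ge>0. \<forall>g\<in>S u. Inv s g" by (intro allI impI ballI) (rule two_imp, simp_all)
  qed
  have B': "(\<forall>t\<ge>0. \<forall>g\<in>S t. Inv t g) \<longleftrightarrow> (\<forall>t\<ge>0. \<forall>g\<in>supp M (X t).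
                  distr M borel (\<lambda>\<omega>. g ** X t \<omega> ** matrix_inv g) = distr M borel (X t))"
    unfolding Inv_def ..
  have C: "(\<forall>s\<ge>0. \<forall>u\<ge>0. \<forall>g\<in>S u. Inv s g) \<longleftrightarrow>
      (\<forall>g\<in>H_X M X. process_law M (\<lambda>t \<omega>. matrix_inv g ** X t \<omega> ** g) = process_law M X)"
  proof
    assume "\<forall>s\<ge>0. \<forall>u\<ge>0. \<forall>g\<in>S u. Inv s g"
    then show "\<forall>g\<in>H_X M X. process_law M (\<lambda>t \<omega>. matrix_inv g ** X t \<omega> ** g) = process_law M X"
      by (intro ballI imp_P3) simp_all
  next
    assume "\<forall>g\<in>H_X M X. process_law M (\<lambda>t \<omega>. matrix_inv g ** X t \<omega> ** g) = process_law M X"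
    then show "\<forall>s\<ge>0. \<forall>u\<ge>0. \<forall>g\<in>S u. Inv s g" by (intro allI impI ballI) (rule P3_imp)
  qed
  have comb: "\<And>a p q q' r. a = p \<Longrightarrow> p = q \<Longrightarrow> q = q' \<Longrightarrow> p = r \<Longrightarrow> (a = q') \<and> (a = r)"
    by simp
  show ?thesis by (rule comb[OF A B B' C])
qed


end
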